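(* Let $\mathcal{M}=(E,\rho)$ be a $q$-matroid, $E_1=\mathrm{cl}(0)$, and $E_2\le E$ with $E=E_1\oplus E_2$. Let $\mathcal{M}_i=\mathcal{M}|_{E_i}=(E_i,\rho_i)$ and $\pi_i:E\to E_i$ the projections. Then (a) $\mathcal{M}_1$ is the trivial $q$-matroid on $E_1$; (b) $\rho(V)=\rho_2(\pi_2(V))$ for all $V\le E$; (c) $\mathcal{M}=\mathcal{M}_1\oplus\mathcal{M}_2$. Moreover, $\mathrm{cl}(0)$ consists of all vectors $x\in E$ with $\rho(\langle x\rangle)=0$.
   Context: Let $\mathbb{F}=\mathbb{F}_q$. A $q$-matroid is $\mathcal{M}=(E,\rho)$, $E$ a finite-dimensional $\mathbb{F}$-vector space, $\rho$ from subspaces to $\mathbb{Z}_{\ge0}$ with $0\le\rho(V)\le\dim V$, monotone and submodular. Closure: $\mathrm{cl}(V)=\sum\{\langle x\rangle:\rho(V+\langle x\rangle)=\rho(V)\}$. Restriction $\mathcal{M}|_X=(X,\rho|_{\mathcal{L}(X)})$. Trivial $q$-matroid: rank identically $0$. $\mathcal{M}=\mathcal{M}_1\oplus\mathcal{M}_2$ means $E=E_1\oplus E_2$ and $\rho(V)=\dim V+\min_{X\le V}(\rho_1(\pi_1(X))+\rho_2(\pi_2(X))-\dim X)$ for all $V$. *)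

theory Defs
  imports Complex_Main
begin

text \<open>A q-matroid (E, rho) has ground space E, a
finite-dimensional subspace; rho is only relevant on subspaces of E.\<close>

definition sumsp :: "'v::ab_group_add set \<Rightarrow> 'v set \<Rightarrow> 'v set" where
  "sumsp V W = {v + w | v w. v \<in> V \<and> w \<in> W}"

definition is_subsp :: "('a::field \<Rightarrow> 'v::ab_group_add \<Rightarrow> 'v) \<Rightarrow> 'v set \<Rightarrow> 'v set \<Rightarrow> bool" where
  "is_subsp scale E V \<longleftrightarrow> module.subspace scale V \<and> V \<subseteq> E"

definition qmatroid :: "('a::field \<Rightarrow> 'v::ab_group_add \<Rightarrow> 'v) \<Rightarrow> 'v set \<Rightarrow> ('v set \<Rightarrow> nat) \<Rightarrow> bool" where
  "qmatroid scale E rho \<longleftrightarrow>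
     vector_space scale \<and> module.subspace scale E \<and>
     (\<exists>B. finite B \<and> B \<subseteq> E \<and> module.span scale B = E) \<and>
     (\<forall>V. is_subsp scale E V \<longrightarrow> rho V \<le> vector_space.dim scale V) \<and>
     (\<forall>V W. is_subsp scale E V \<and> is_subsp scale E W \<and> V \<subseteq> W \<longrightarrow> rho V \<le> rho W) \<and>
     (\<forall>V W. is_subsp scale E V \<and> is_subsp scale E W \<longrightarrow>
        rho (sumsp V W) + rho (V \<inter> W) \<le> rho V + rho W)"

text \<open>Closure: sum of all \<langle>x\<rangle> (x in E) with rho(V + \<langle>x\<rangle>) = rho(V);
  a sum of subspaces is the span of their union.\<close>
definition qcl :: "('a::field \<Rightarrow> 'v::ab_group_add \<Rightarrow> 'v) \<Rightarrow> 'v set \<Rightarrow> ('v set \<Rightarrow> nat) \<Rightarrow> 'v set \<Rightarrow> 'v set" where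
  "qcl scale E rho V =
     module.span scale (\<Union>{module.span scale {x} | x. x \<in> E \<and>
        rho (sumsp V (module.span scale {x})) = rho V})"

text \<open>Restriction M|X = (X, rho restricted to subspaces of X): represented
  by the same rank function, considered on subspaces of X only.\<close>
definition trivial_qmatroid :: "('a::field \<Rightarrow> 'v::ab_group_add \<Rightarrow> 'v) \<Rightarrow> 'v set \<Rightarrow> ('v set \<Rightarrow> nat) \<Rightarrow> bool" where
  "trivial_qmatroid scale E rho \<longleftrightarrow> qmatroid scale E rho \<and> (\<forall>V. is_subsp scale E V \<longrightarrow> rho V = 0)"

definition inner_direct_sum :: "('a::field \<Rightarrow> 'v::ab_group_add \<Rightarrow> 'v) \<Rightarrow> 'v set \<Rightarrow> 'v set \<Rightarrow> 'v set \<Rightarrow> bool" where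
  "inner_direct_sum scale E E1 E2 \<longleftrightarrow>
     is_subsp scale E E1 \<and> is_subsp scale E E2 \<and> E1 \<inter> E2 = {0} \<and> sumsp E1 E2 = E"

definition proj1 :: "'v::ab_group_add set \<Rightarrow> 'v set \<Rightarrow> 'v \<Rightarrow> 'v" where
  "proj1 E1 E2 v = (THE a. a \<in> E1 \<and> v - a \<in> E2)"

definition proj2 :: "'v::ab_group_add set \<Rightarrow> 'v set \<Rightarrow> 'v \<Rightarrow> 'v" where
  "proj2 E1 E2 v = (THE b. b \<in> E2 \<and> v - b \<in> E1)"

definition qdirect_sum ::
  "('a::field \<Rightarrow> 'v::ab_group_add \<Rightarrow> 'v) \<Rightarrow> 'v set \<Rightarrow> ('v set \<Rightarrow> nat) \<Rightarrow>
   'v set \<Rightarrow> ('v set \<Rightarrow> nat) \<Rightarrow> 'v set \<Rightarrow> ('v set \<Rightarrow> nat) \<Rightarrow> bool" where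
  "qdirect_sum scale E rho E1 rho1 E2 rho2 \<longleftrightarrow>
     qmatroid scale E rho \<and> qmatroid scale E1 rho1 \<and> qmatroid scale E2 rho2 \<and>
     inner_direct_sum scale E E1 E2 \<and>
     (\<forall>V. is_subsp scale E V \<longrightarrow>
        int (rho V) = int (vector_space.dim scale V) +
          Min {int (rho1 (proj1 E1 E2 ` X)) + int (rho2 (proj2 E1 E2 ` X))
                 - int (vector_space.dim scale X) | X. is_subsp scale V X})"

end

theory Submission
  imports Defs
begin

context vector_space begin

lemma qm_vs: "qmatroid scale E rho \<Longrightarrow> vector_space scale"
  by (simp add: qmatroid_def)

lemma fin_basis:
  assumes "finite B0" "E \<subseteq> span B0" "F \<subseteq> E"
  obtains B where "B \<subseteq> F" "independent B" "F \<subseteq> span B" "finite B" "card B = dim F"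
proof -
  obtain B where B: "B \<subseteq> F" "independent B" "F \<subseteq> span B"
    using maximal_independent_subset[of F] by blast
  have "finite B" using independent_span_bound[OF assms(1) B(2)] B(1) assms(2,3) by blast
  moreover have "card B = dim F" using basis_card_eq_dim B by blast
  ultimately show ?thesis using B that by blast
qed

lemma dim_zero_sp: "dim {0} = 0"
  by (metis dim_span dim_eq_card_independent independent_empty card.empty span_empty)

lemma sumsp_span: "sumsp (span S) (span T) = span (S \<union> T)"
  by (simp add: sumsp_def span_Un)

lemma qm_unfold:
  assumes "qmatroid scale E rho"
  shows "subspace E" "\<exists>B. finite B \<and> B \<subseteq> E \<and> span B = E"
    "\<And>V. is_subsp scale E V \<Longrightarrow> rho V \<le> dim V"
    "\<And>V W. is_subsp scale E V \<Longrightarrow> is_subsp scale E W \<Longrightarrow> V \<subseteq> W \<Longrightarrow> rho V \<le> rho W"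
    "\<And>V W. is_subsp scale E V \<Longrightarrow> is_subsp scale E W \<Longrightarrow>
        rho (sumsp V W) + rho (V \<inter> W) \<le> rho V + rho W"
  using assms unfolding qmatroid_def by blast+

lemma rho_zero: "qmatroid scale E rho \<Longrightarrow> rho {0} = 0"
  using qm_unfold(1)[of E rho] qm_unfold(3)[of E rho "{0}"] dim_zero_sp
  by (simp add: is_subsp_def subspace_0)

lemma sub_qm:
  assumes "qmatroid scale E rho" "is_subsp scale E F"
  shows "qmatroid scale F rho"
proof -
  obtain B0 where B0: "finite B0" "B0 \<subseteq> E" "span B0 = E" using qm_unfold(2)[OF assms(1)] by blast
  have FE: "F \<subseteq> E" using assms(2) by (simp add: is_subsp_def)
  have E0: "E \<subseteq> span B0" using B0(3) by simp
  obtain B where B: "B \<subseteq> F" "independent B" "F \<subseteq> span B" "finite B" "card B = dim F"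
    by (rule fin_basis[OF B0(1) E0 FE])
  have sF: "subspace F" using assms(2) by (simp add: is_subsp_def)
  have spB: "span B = F" using span_subspace[OF B(1) B(3) sF] .
  have sub: "\<And>V. is_subsp scale F V \<Longrightarrow> is_subsp scale E V"
    using FE by (auto simp: is_subsp_def)
  have c1: "\<exists>B. finite B \<and> B \<subseteq> F \<and> span B = F"
    using spB B by blast
  have c2: "\<forall>V. is_subsp scale F V \<longrightarrow> rho V \<le> dim V"
    using sub qm_unfold(3)[OF assms(1)] by blast
  have c3: "\<forall>V W. is_subsp scale F V \<and> is_subsp scale F W \<and> V \<subseteq> W \<longrightarrow> rho V \<le> rho W"
    using sub qm_unfold(4)[OF assms(1)] by blast
  have c4: "\<forall>V W. is_subsp scale F V \<and> is_subsp scale F W \<longrightarrow>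
        rho (sumsp V W) + rho (V \<inter> W) \<le> rho V + rho W"
    using sub qm_unfold(5)[OF assms(1)] by blast
  show ?thesis unfolding qmatroid_def using sF vector_space_axioms c1 c2 c3 c4 by (intro conjI)
qed

lemma span_is_subsp: "subspace E \<Longrightarrow> B \<subseteq> E \<Longrightarrow> is_subsp scale E (span B)"
  by (simp add: is_subsp_def span_minimal)

lemma rank_zero_span:
  assumes qm: "qmatroid scale E rho" and "finite B" "B \<subseteq> E" "\<forall>x\<in>B. rho (span {x}) = 0"
  shows "rho (span B) = 0"
  using assms(2-4)
proof (induction B rule: finite_induct)
  case empty
  then show ?case using rho_zero[OF qm] by simp
next
  case (insert x B)
  have sE: "subspace E" using qm_unfold(1)[OF qm] .
  have "span (insert x B) = sumsp (span {x}) (span B)" by (simp add: sumsp_span)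
  moreover have "rho (sumsp (span {x}) (span B)) \<le> rho (span {x}) + rho (span B)"
    using qm_unfold(5)[OF qm, of "span {x}" "span B"] span_is_subsp[OF sE] insert by auto
  ultimately show ?case using insert by auto
qed

lemma key:
  assumes qm: "qmatroid scale E rho" and X: "is_subsp scale E X" and V: "is_subsp scale E V"
    and XV: "X \<subseteq> V"
  shows "rho V + dim X \<le> rho X + dim V"
proof -
  have sE: "subspace E" using qm_unfold(1)[OF qm] .
  obtain B0 where B0: "finite B0" "B0 \<subseteq> E" "span B0 = E" using qm_unfold(2)[OF qm] by blast
  have XE: "X \<subseteq> E" using X by (simp add: is_subsp_def)
  obtain BX where BX: "BX \<subseteq> X" "independent BX" "X \<subseteq> span BX" "finite BX" "card BX = dim X"
    by (rule fin_basis[OF B0(1) _ XE]) (simp add: B0(3))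
  obtain BV where BV: "BX \<subseteq> BV" "BV \<subseteq> V" "independent BV" "V \<subseteq> span BV"
    using maximal_independent_subset_extend[of BX V] BX XV by blast
  have fBV: "finite BV" using independent_span_bound[OF B0(1) BV(3)] BV(2) V B0(3)
    by (auto simp: is_subsp_def)
  have cV: "card BV = dim V" using basis_card_eq_dim BV(2-4) by blast
  define Y where "Y = span (BV - BX)"
  have dY: "dim Y = dim V - dim X"
    unfolding Y_def using dim_span_eq_card_independent[of "BV - BX"] independent_mono[OF BV(3)]
      card_Diff_subset[OF BX(4) BV(1)] cV BX(5) by auto
  have sX: "span BX = X" using span_subspace BX X by (auto simp: is_subsp_def)
  have sV: "span BV = V" using span_subspace BV V by (auto simp: is_subsp_def)
  have "sumsp X Y = span (BX \<union> (BV - BX))" unfolding Y_def sX[symmetric] by (rule sumsp_span)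
  also have "\<dots> = V" using BV(1) sV by (simp add: Un_absorb1)
  finally have XY: "sumsp X Y = V" .
  have Ysub: "is_subsp scale E Y" unfolding Y_def
    by (rule span_is_subsp[OF sE]) (use BV(2) V in \<open>auto simp: is_subsp_def\<close>)
  have "rho V \<le> rho X + rho Y" using qm_unfold(5)[OF qm X Ysub] XY by simp
  moreover have "rho Y \<le> dim Y" using qm_unfold(3)[OF qm Ysub] .
  moreover have "dim X \<le> dim V" using card_mono[OF fBV BV(1)] cV BX(5) by simp
  ultimately show ?thesis using dY by linarith
qed

end

lemma proj_unique:
  fixes E1 E2 :: "'v::ab_group_add set"
  assumes "module.subspace scale E1" "module.subspace scale E2" "E1 \<inter> E2 = {0}"
    "a \<in> E1" "b \<in> E2" "vector_space scale"
  shows "proj1 E1 E2 (a + b) = a \<and> proj2 E1 E2 (a + b) = b"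
proof -
  interpret vector_space scale by fact
  have 1: "proj1 E1 E2 (a + b) = a" unfolding proj1_def
  proof (rule the_equality)
    show "a \<in> E1 \<and> a + b - a \<in> E2" using assms by simp
    fix a' assume h: "a' \<in> E1 \<and> a + b - a' \<in> E2"
    have "a - a' \<in> E1" using h assms subspace_diff by blast
    moreover have "a - a' \<in> E2" using subspace_diff[OF assms(2), of "a + b - a'" b] h assms
      by (simp add: algebra_simps)
    ultimately show "a' = a" using assms(3) by (metis IntI singletonD right_minus_eq)
  qed
  have 2: "proj2 E1 E2 (a + b) = b" unfolding proj2_def
  proof (rule the_equality)
    show "b \<in> E2 \<and> a + b - b \<in> E1" using assms by simp
    fix b' assume h: "b' \<in> E2 \<and> a + b - b' \<in> E1"
    have "b - b' \<in> E2" using h assms subspace_diff by blast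
    moreover have "b - b' \<in> E1" using subspace_diff[OF assms(1), of "a + b - b'" a] h assms
      by (simp add: algebra_simps)
    ultimately show "b' = b" using assms(3) by (metis IntI singletonD right_minus_eq)
  qed
  show ?thesis using 1 2 by simp
qed

context vector_space begin

lemma lin_image_subspace:
  assumes "subspace E" "\<And>x y. x \<in> E \<Longrightarrow> y \<in> E \<Longrightarrow> f (x + y) = f x + f y"
    "\<And>c x. x \<in> E \<Longrightarrow> f (c *s x) = c *s f x" "subspace V" "V \<subseteq> E"
  shows "subspace (f ` V)"
proof -
  have "f 0 = 0" using assms(3)[of 0 0] subspace_0[OF assms(1)] by simp
  then have "0 \<in> f ` V" using subspace_0[OF assms(4)] by force
  moreover have "\<forall>x\<in>f ` V. \<forall>y\<in>f ` V. x + y \<in> f ` V"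
  proof (intro ballI)
    fix x y assume "x \<in> f ` V" "y \<in> f ` V"
    then obtain u w where "u \<in> V" "w \<in> V" "x = f u" "y = f w" by blast
    then show "x + y \<in> f ` V" using assms(2)[of u w] assms(5) subspace_add[OF assms(4)]
      by (metis image_eqI subsetD)
  qed
  moreover have "\<forall>c. \<forall>x\<in>f ` V. c *s x \<in> f ` V"
  proof (intro allI ballI)
    fix c x assume "x \<in> f ` V"
    then obtain u where "u \<in> V" "x = f u" by blast
    then show "c *s x \<in> f ` V" using assms(3)[of u c] assms(5) subspace_scale[OF assms(4)]
      by (metis image_eqI subsetD)
  qed
  ultimately show ?thesis unfolding subspace_def by blast
qed

lemma absorb_zero:
  assumes qm: "qmatroid scale E rho" and W: "is_subsp scale E W" and F: "is_subsp scale E F"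
    and r: "rho F = 0"
  shows "rho (sumsp W F) = rho W"
proof -
  have sE: "subspace E" using qm_unfold(1)[OF qm] .
  have "subspace (sumsp W F)" unfolding sumsp_def using subspace_sums W F by (auto simp: is_subsp_def)
  moreover have "sumsp W F \<subseteq> E" unfolding sumsp_def using W F subspace_add[OF sE]
    by (auto simp: is_subsp_def)
  ultimately have S: "is_subsp scale E (sumsp W F)" by (simp add: is_subsp_def)
  have "W \<subseteq> sumsp W F" unfolding sumsp_def using F subspace_0 by (force simp: is_subsp_def)
  then have "rho W \<le> rho (sumsp W F)" using qm_unfold(4)[OF qm W S] by blast
  moreover have "rho (sumsp W F) \<le> rho W" using qm_unfold(5)[OF qm W F] r by simp
  ultimately show ?thesis by simp
qed

end

theorem proposition7p6:
  fixes scale :: "'a::{field,finite} \<Rightarrow> 'v::ab_group_add \<Rightarrow> 'v"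
    and E E1 E2 :: "'v set" and rho :: "'v set \<Rightarrow> nat"
  assumes "qmatroid scale E rho"
    and "E1 = qcl scale E rho {0}"
    and "inner_direct_sum scale E E1 E2"
  shows "trivial_qmatroid scale E1 rho
       \<and> (\<forall>V. is_subsp scale E V \<longrightarrow> rho V = rho (proj2 E1 E2 ` V))
       \<and> qdirect_sum scale E rho E1 rho E2 rho
       \<and> qcl scale E rho {0} = {x \<in> E. rho (module.span scale {x}) = 0}"
proof -
  note qm = assms(1)
  have vs: "vector_space scale" using qm by (simp add: qmatroid_def)
  interpret vector_space scale by fact
  have sE: "subspace E" using qm_unfold(1)[OF qm] .
  obtain B0 where B0: "finite B0" "B0 \<subseteq> E" "span B0 = E" using qm_unfold(2)[OF qm] by blast
  define L where "L = {x \<in> E. rho (span {x}) = 0}"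
  have r0: "rho {0} = 0" using rho_zero[OF qm] .
  define U where "U = \<Union>{span {x} | x. x \<in> E \<and> rho (sumsp {0} (span {x})) = rho {0}}"
  have sz: "\<And>S. sumsp {0} S = S" unfolding sumsp_def by auto
  have U: "U = \<Union>{span {x} | x. x \<in> L}" unfolding U_def L_def sz r0 by simp
  have "U \<subseteq> span L" unfolding U using span_mono[of "{_}" L] by blast
  moreover have "L \<subseteq> U" unfolding U using span_base[of _ "{_}"] by blast
  ultimately have "span U = span L" using span_mono[of L U] span_mono[of U "span L"] span_span
    by blast
  then have qcl0: "qcl scale E rho {0} = span L" unfolding qcl_def U_def by simp
  have LE: "L \<subseteq> E" unfolding L_def by blast
  obtain BL where BL: "BL \<subseteq> L" "independent BL" "L \<subseteq> span BL" "finite BL" "card BL = dim L"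
    by (rule fin_basis[OF B0(1) _ LE]) (simp add: B0(3))
  have rBL: "rho (span BL) = 0"
    using rank_zero_span[OF qm BL(4)] BL(1) LE unfolding L_def by blast
  have spL: "span L = span BL" using span_mono[OF BL(1)] span_mono[OF BL(3)] span_span by blast
  have "span BL \<subseteq> L"
  proof
    fix x assume x: "x \<in> span BL"
    have xE: "x \<in> E" using x span_minimal[of BL E] BL(1) LE sE by blast
    have "span {x} \<subseteq> span BL" using x span_minimal[of "{x}" "span BL"] by simp
    moreover have "is_subsp scale E (span {x})" using span_is_subsp[OF sE] xE by simp
    moreover have "is_subsp scale E (span BL)" using span_is_subsp[OF sE] BL(1) LE by simp
    ultimately have "rho (span {x}) \<le> rho (span BL)" using qm_unfold(4)[OF qm] by blast
    then show "x \<in> L" using rBL xE unfolding L_def by simp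
  qed
  then have spLL: "span L = L" using spL span_superset by blast
  have E1: "E1 = span BL" using assms(2) qcl0 spL by simp
  have rE1: "rho E1 = 0" using E1 rBL by simp
  have ids: "is_subsp scale E E1" "is_subsp scale E E2" "E1 \<inter> E2 = {0}" "sumsp E1 E2 = E"
    using assms(3) unfolding inner_direct_sum_def by blast+
  have s1: "subspace E1" and s2: "subspace E2" using ids by (auto simp: is_subsp_def)
  have triv: "trivial_qmatroid scale E1 rho"
    unfolding trivial_qmatroid_def
  proof (intro conjI allI impI)
    show "qmatroid scale E1 rho" using sub_qm[OF qm ids(1)] .
    fix V assume "is_subsp scale E1 V"
    then have "is_subsp scale E V" "V \<subseteq> E1" using ids(1) by (auto simp: is_subsp_def)
    then show "rho V = 0" using qm_unfold(4)[OF qm _ ids(1)] rE1 by fastforce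
  qed
  have dec: "proj1 E1 E2 v \<in> E1 \<and> proj2 E1 E2 v \<in> E2 \<and> proj1 E1 E2 v + proj2 E1 E2 v = v"
    if vE: "v \<in> E" for v
  proof -
    obtain a b where ab: "a \<in> E1" "b \<in> E2" "v = a + b" using vE ids(4) unfolding sumsp_def by blast
    show ?thesis using proj_unique[OF s1 s2 ids(3) ab(1,2) vs] ab by simp
  qed
  have E1E: "E1 \<subseteq> E" and E2E: "E2 \<subseteq> E" using ids by (auto simp: is_subsp_def)
  have lin1: "proj1 E1 E2 (x + y) = proj1 E1 E2 x + proj1 E1 E2 y"
   and lin2: "proj2 E1 E2 (x + y) = proj2 E1 E2 x + proj2 E1 E2 y" if "x \<in> E" "y \<in> E" for x y
  proof -
    let ?a = "proj1 E1 E2 x + proj1 E1 E2 y" and ?b = "proj2 E1 E2 x + proj2 E1 E2 y"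
    have dx: "proj1 E1 E2 x + proj2 E1 E2 x = x" and dy: "proj1 E1 E2 y + proj2 E1 E2 y = y"
      using dec[OF that(1)] dec[OF that(2)] by blast+
    have "?a + ?b = (proj1 E1 E2 x + proj2 E1 E2 x) + (proj1 E1 E2 y + proj2 E1 E2 y)"
      by (simp add: algebra_simps)
    then have eq: "x + y = ?a + ?b" using dx dy by simp
    have "?a \<in> E1" using dec that subspace_add[OF s1] by blast
    moreover have "?b \<in> E2" using dec that subspace_add[OF s2] by blast
    ultimately have "proj1 E1 E2 (?a + ?b) = ?a \<and> proj2 E1 E2 (?a + ?b) = ?b"
      by (rule proj_unique[OF s1 s2 ids(3) _ _ vs])
    then show "proj1 E1 E2 (x + y) = ?a" "proj2 E1 E2 (x + y) = ?b" using eq by simp_all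
  qed
  have sc1: "proj1 E1 E2 (scale c x) = scale c (proj1 E1 E2 x)"
   and sc2: "proj2 E1 E2 (scale c x) = scale c (proj2 E1 E2 x)" if "x \<in> E" for c x
  proof -
    have dx: "proj1 E1 E2 x + proj2 E1 E2 x = x" using dec[OF that] by blast
    have eq: "scale c x = scale c (proj1 E1 E2 x) + scale c (proj2 E1 E2 x)"
      using arg_cong[OF dx, of "scale c"] scale_right_distrib by simp
    have "scale c (proj1 E1 E2 x) \<in> E1" using dec that subspace_scale[OF s1] by blast
    moreover have "scale c (proj2 E1 E2 x) \<in> E2" using dec that subspace_scale[OF s2] by blast
    ultimately have "proj1 E1 E2 (scale c (proj1 E1 E2 x) + scale c (proj2 E1 E2 x)) = scale c (proj1 E1 E2 x) \<and>
        proj2 E1 E2 (scale c (proj1 E1 E2 x) + scale c (proj2 E1 E2 x)) = scale c (proj2 E1 E2 x)"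
      by (rule proj_unique[OF s1 s2 ids(3) _ _ vs])
    then show "proj1 E1 E2 (scale c x) = scale c (proj1 E1 E2 x)"
      "proj2 E1 E2 (scale c x) = scale c (proj2 E1 E2 x)" using eq by simp_all
  qed
  have im1: "is_subsp scale E (proj1 E1 E2 ` V)" and im2: "is_subsp scale E (proj2 E1 E2 ` V)"
    if "is_subsp scale E V" for V
  proof -
    have "subspace V" "V \<subseteq> E" using that by (auto simp: is_subsp_def)
    then show "is_subsp scale E (proj1 E1 E2 ` V)" "is_subsp scale E (proj2 E1 E2 ` V)"
      using lin_image_subspace[OF sE lin1 sc1] lin_image_subspace[OF sE lin2 sc2]
        dec E1E E2E unfolding is_subsp_def by blast+
  qed
  have partb: "rho V = rho (proj2 E1 E2 ` V)" if V: "is_subsp scale E V" for V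
  proof -
    have VE: "V \<subseteq> E" using V by (simp add: is_subsp_def)
    have "sumsp V E1 = sumsp (proj2 E1 E2 ` V) E1"
    proof
      show "sumsp V E1 \<subseteq> sumsp (proj2 E1 E2 ` V) E1"
      proof
        fix z assume "z \<in> sumsp V E1"
        then obtain v e where ve: "v \<in> V" "e \<in> E1" "z = v + e" unfolding sumsp_def by blast
        have "v \<in> E" using ve VE by blast
        then have d: "proj1 E1 E2 v + proj2 E1 E2 v = v" using dec by blast
        have "proj2 E1 E2 v + (proj1 E1 E2 v + e) = (proj1 E1 E2 v + proj2 E1 E2 v) + e"
          by (simp add: algebra_simps)
        then have "z = proj2 E1 E2 v + (proj1 E1 E2 v + e)" using d ve(3) by simp
        moreover have "proj1 E1 E2 v + e \<in> E1" using dec \<open>v \<in> E\<close> ve subspace_add[OF s1] by blast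
        ultimately show "z \<in> sumsp (proj2 E1 E2 ` V) E1" unfolding sumsp_def using ve by blast
      qed
    next
      show "sumsp (proj2 E1 E2 ` V) E1 \<subseteq> sumsp V E1"
      proof
        fix z assume "z \<in> sumsp (proj2 E1 E2 ` V) E1"
        then obtain v e where ve: "v \<in> V" "e \<in> E1" "z = proj2 E1 E2 v + e" unfolding sumsp_def by blast
        have "v \<in> E" using ve VE by blast
        then have d: "proj1 E1 E2 v + proj2 E1 E2 v = v" using dec by blast
        have "(proj1 E1 E2 v + proj2 E1 E2 v) + (e - proj1 E1 E2 v) = proj2 E1 E2 v + e"
          by (simp add: algebra_simps)
        then have "z = v + (e - proj1 E1 E2 v)" using d ve(3) by simp
        moreover have "e - proj1 E1 E2 v \<in> E1" using dec \<open>v \<in> E\<close> ve subspace_diff[OF s1] by blast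
        ultimately show "z \<in> sumsp V E1" unfolding sumsp_def using ve by blast
      qed
    qed
    then show ?thesis using absorb_zero[OF qm V ids(1) rE1] absorb_zero[OF qm im2[OF V] ids(1) rE1]
      by simp
  qed
  have minpart: "int (rho V) = int (dim V) +
          Min {int (rho (proj1 E1 E2 ` X)) + int (rho (proj2 E1 E2 ` X))
                 - int (dim X) | X. is_subsp scale V X}" if V: "is_subsp scale E V" for V
  proof -
    let ?S = "{int (rho (proj1 E1 E2 ` X)) + int (rho (proj2 E1 E2 ` X))
                 - int (dim X) | X. is_subsp scale V X}"
    have XE: "is_subsp scale E X" if "is_subsp scale V X" for X
      using that V by (auto simp: is_subsp_def)
    have val: "int (rho (proj1 E1 E2 ` X)) + int (rho (proj2 E1 E2 ` X)) - int (dim X)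
        = int (rho X) - int (dim X)" if "is_subsp scale V X" for X
    proof -
      have "proj1 E1 E2 ` X \<subseteq> E1" using dec XE[OF that] by (auto simp: is_subsp_def)
      then have "rho (proj1 E1 E2 ` X) = 0" using qm_unfold(4)[OF qm im1[OF XE[OF that]] ids(1)] rE1
        by simp
      then show ?thesis using partb[OF XE[OF that]] by simp
    qed
    have S: "?S = {int (rho X) - int (dim X) | X. is_subsp scale V X}"
    proof (rule Collect_cong)
      fix y
      show "(\<exists>X. y = int (rho (proj1 E1 E2 ` X)) + int (rho (proj2 E1 E2 ` X)) - int (dim X) \<and> is_subsp scale V X)
        = (\<exists>X. y = int (rho X) - int (dim X) \<and> is_subsp scale V X)"
        using val by metis
    qed
    have VV: "is_subsp scale V V" using V by (simp add: is_subsp_def)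
    have lb: "\<And>y. y \<in> ?S \<Longrightarrow> int (rho V) - int (dim V) \<le> y"
    proof -
      fix y assume "y \<in> ?S"
      then obtain X where X: "is_subsp scale V X" "y = int (rho X) - int (dim X)" unfolding S by blast
      have "X \<subseteq> V" using X by (simp add: is_subsp_def)
      then show "int (rho V) - int (dim V) \<le> y" using key[OF qm XE[OF X(1)] V] X by linarith
    qed
    have ub: "\<And>y. y \<in> ?S \<Longrightarrow> y \<le> 0"
    proof -
      fix y assume "y \<in> ?S"
      then obtain X where X: "is_subsp scale V X" "y = int (rho X) - int (dim X)" unfolding S by blast
      then show "y \<le> 0" using qm_unfold(3)[OF qm XE[OF X(1)]] by linarith
    qed
    have sub: "?S \<subseteq> {int (rho V) - int (dim V)..0}"
    proof
      fix y assume y: "y \<in> ?S"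
      show "y \<in> {int (rho V) - int (dim V)..0}" using lb[OF y] ub[OF y] by simp
    qed
    have fin: "finite ?S" by (rule finite_subset[OF sub]) simp
    have mem: "int (rho V) - int (dim V) \<in> ?S" unfolding S using VV by blast
    have "Min ?S = int (rho V) - int (dim V)"
      by (rule Min_eqI[OF fin]) (use lb mem in auto)
    then show ?thesis by simp
  qed
  have qd: "qdirect_sum scale E rho E1 rho E2 rho"
    unfolding qdirect_sum_def using qm sub_qm[OF qm ids(1)] sub_qm[OF qm ids(2)] assms(3) minpart
    by blast
  show ?thesis using triv partb qd qcl0 spLL unfolding L_def by blast
qed

end
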